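(* Let $X\in\mathbb{R}^{n\times p}$, $\mathbf y\in\mathbb{R}^n$ with $\mathbf y\ne\mathbf 0$, and $\|X^T\mathbf y\|_\infty>\lambda_1>0$. Suppose $\boldsymbol\theta_1^*\ne\frac{\mathbf y}{\|X^T\mathbf y\|_\infty}$, and let $\mathbf a=\frac{\mathbf y}{\lambda_1}-\boldsymbol\theta_1^*$. For $\lambda\in(0,\lambda_1]$ define $$f(\lambda)=\frac{\langle\frac{\mathbf y}{\lambda}-\boldsymbol\theta_1^*,\mathbf a\rangle}{\|\frac{\mathbf y}{\lambda}-\boldsymbol\theta_1^*\|_2},\qquad g(\lambda)=\frac{\langle\frac{\mathbf y}{\lambda}-\boldsymbol\theta_1^*,\mathbf y\rangle}{\|\frac{\mathbf y}{\lambda}-\boldsymbol\theta_1^*\|_2}.$$ Then $f$ is strictly increasing on $(0,\lambda_1]$ and $g$ is strictly decreasing on $(0,\lambda_1]$.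
   Context: Let $F=\{\boldsymbol\theta\in\mathbb{R}^n:\|X^T\boldsymbol\theta\|_\infty\le 1\}$. For $\lambda>0$, the Lasso dual optimum $\boldsymbol\theta^*(\lambda)$ is the unique minimizer of $\frac12\|\boldsymbol\theta-\mathbf y/\lambda\|_2^2$ over $\boldsymbol\theta\in F$, i.e. the Euclidean projection of $\mathbf y/\lambda$ onto $F$. Write $\boldsymbol\theta_1^*=\boldsymbol\theta^*(\lambda_1)$. *)

theory Defs
  imports "HOL-Analysis.Analysis"
begin

definition linf_norm :: "real^'k \<Rightarrow> real" where
  "linf_norm v = Max (range (\<lambda>j. \<bar>v $ j\<bar>))"

definition dual_feasible :: "real^'p^'n \<Rightarrow> (real^'n) set" where
  "dual_feasible X = {\<theta>. linf_norm (transpose X *v \<theta>) \<le> 1}"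

definition lasso_dual_opt :: "real^'p^'n \<Rightarrow> real^'n \<Rightarrow> real \<Rightarrow> real^'n" where
  "lasso_dual_opt X y lam = closest_point (dual_feasible X) ((1/lam) *\<^sub>R y)"

end

theory Submission
  imports Defs
begin

lemma P_pos: fixes A B C t :: real assumes "C > 0" "B^2 < A*C"
  shows "A + 2*t*B + t^2*C > 0"
proof -
  have "C*(A + 2*t*B + t^2*C) = (C*t+B)^2 + (A*C - B^2)" by (simp add: power2_eq_square algebra_simps)
  also have "\<dots> > 0" using assms by (smt (verit) zero_le_power2)
  finally show ?thesis using assms by (simp add: zero_less_mult_iff)
qed

lemma scal_h: fixes A B C :: real assumes C: "C > 0" "B^2 < A*C" and s: "0 \<le> s1" "s1 < s2"
  shows "(A+s2*B)/sqrt(A+2* s2*B+s2^2*C) < (A+s1*B)/sqrt(A+2* s1*B+s1^2*C)"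
proof -
  let ?P = "\<lambda>s. A+2* s*B+s^2*C"
  let ?h = "\<lambda>s. (A+s*B)/sqrt(?P s)"
  have Pp: "\<And>s. ?P s > 0" using P_pos[OF C] by blast
  have "?h s1 > ?h s2"
  proof (rule DERIV_neg_imp_decreasing_open[OF s(2)])
    fix x assume x: "s1 < x" "x < s2"
    have D: "DERIV ?h x :> (B * sqrt (?P x) - (A+x*B) * ((2*B + 2* x*C) / (2 * sqrt (?P x)))) / (sqrt (?P x))^2"
      using Pp[of x] by (auto intro!: derivative_eq_intros simp: power2_eq_square divide_simps)
    have sq: "sqrt (?P x) > 0" using Pp[of x] by simp
    define q where "q = sqrt (?P x)"
    have qq: "q^2 = ?P x" unfolding q_def using Pp[of x] by simp
    have qp: "q > 0" using sq q_def by simp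
    have neg: "x*(B^2 - A*C) < 0" using x s C by (simp add: mult_pos_neg)
    have "B * sqrt (?P x) - (A+x*B) * ((2*B + 2* x*C) / (2 * sqrt (?P x))) = (B * q^2 - (A+x*B)*(B+x*C)) / q"
      using sq unfolding q_def[symmetric] by (simp add: field_simps power2_eq_square)
    also have "B * q^2 - (A+x*B)*(B+x*C) = x*(B^2 - A*C)" unfolding qq by (simp add: power2_eq_square algebra_simps)
    finally have "(B * sqrt (?P x) - (A+x*B) * ((2*B + 2* x*C) / (2 * sqrt (?P x)))) < 0"
      using qp neg by (simp add: divide_neg_pos)
    then have "(B * sqrt (?P x) - (A+x*B) * ((2*B + 2* x*C) / (2 * sqrt (?P x)))) / (sqrt (?P x))^2 < 0"
      using sq by (simp add: divide_neg_pos)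
    with D show "\<exists>y. DERIV ?h x :> y \<and> y < 0" by blast
  next
    show "continuous_on {s1..s2} ?h" using Pp by (auto intro!: continuous_intros simp: less_imp_neq[symmetric])
  qed
  then show ?thesis by simp
qed


lemma scal_k: fixes A B C :: real assumes C: "C > 0" "B^2 < A*C" and s: "s1 < s2"
  shows "(B+s1*C)/sqrt(A+2* s1*B+s1^2*C) < (B+s2*C)/sqrt(A+2* s2*B+s2^2*C)"
proof -
  let ?P = "\<lambda>s. A+2* s*B+s^2*C"
  let ?h = "\<lambda>s. (B+s*C)/sqrt(?P s)"
  have Pp: "\<And>s. ?P s > 0" using P_pos[OF C] by blast
  have "?h s1 < ?h s2"
  proof (rule DERIV_pos_imp_increasing_open[OF s(1)])
    fix x assume x: "s1 < x" "x < s2"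
    have D: "DERIV ?h x :> (C * sqrt (?P x) - (B+x*C) * ((2*B + 2* x*C) / (2 * sqrt (?P x)))) / (sqrt (?P x))^2"
      using Pp[of x] by (auto intro!: derivative_eq_intros simp: power2_eq_square divide_simps)
    have sq: "sqrt (?P x) > 0" using Pp[of x] by simp
    define q where "q = sqrt (?P x)"
    have qq: "q^2 = ?P x" unfolding q_def using Pp[of x] by simp
    have qp: "q > 0" using sq q_def by simp
    have pos: "A*C - B^2 > 0" using C by simp
    have "C * sqrt (?P x) - (B+x*C) * ((2*B + 2* x*C) / (2 * sqrt (?P x))) = (C * q^2 - (B+x*C)*(B+x*C)) / q"
      using sq unfolding q_def[symmetric] by (simp add: field_simps power2_eq_square)
    also have "C * q^2 - (B+x*C)*(B+x*C) = A*C - B^2" unfolding qq by (simp add: power2_eq_square algebra_simps)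
    finally have "(C * sqrt (?P x) - (B+x*C) * ((2*B + 2* x*C) / (2 * sqrt (?P x)))) > 0"
      using qp pos by simp
    then have "(C * sqrt (?P x) - (B+x*C) * ((2*B + 2* x*C) / (2 * sqrt (?P x)))) / (sqrt (?P x))^2 > 0"
      using sq by simp
    with D show "\<exists>y. DERIV ?h x :> y \<and> y > 0" by blast
  next
    show "continuous_on {s1..s2} ?h" using Pp by (auto intro!: continuous_intros simp: less_imp_neq[symmetric])
  qed
  then show ?thesis by simp
qed

lemma linf_ge: "\<bar>v $ j\<bar> \<le> linf_norm v"
  unfolding linf_norm_def by (rule Max_ge) auto

lemma linf_le_iff: "linf_norm v \<le> c \<longleftrightarrow> (\<forall>j. \<bar>v $ j\<bar> \<le> c)"
  unfolding linf_norm_def by (subst Max_le_iff) auto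

lemma closed_F: "closed (dual_feasible X)"
proof -
  have "dual_feasible X = {\<theta>. \<forall>j. \<bar>(transpose X *v \<theta>) $ j\<bar> \<le> 1}"
    unfolding dual_feasible_def linf_le_iff by simp
  also have "closed \<dots>"
    by (intro closed_Collect_all closed_Collect_le continuous_intros)
  finally show ?thesis .
qed

lemma mv_scale: "(M::real^'p^'n) *v (c *\<^sub>R v) = c *\<^sub>R (M *v v)"
  by (simp add: linear_scale[OF bounded_linear.linear[OF matrix_vector_mul_bounded_linear]])


theorem lemma5:
  fixes X :: "real^'p^'n" and y :: "real^'n" and lam1 :: real
  assumes "y \<noteq> 0"
    and "0 < lam1" and "lam1 < linf_norm (transpose X *v y)"
    and "lasso_dual_opt X y lam1 \<noteq> (1 / linf_norm (transpose X *v y)) *\<^sub>R y"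
  defines "f \<equiv> (\<lambda>lam. (((1/lam) *\<^sub>R y - lasso_dual_opt X y lam1) \<bullet> ((1/lam1) *\<^sub>R y - lasso_dual_opt X y lam1))
                    / norm ((1/lam) *\<^sub>R y - lasso_dual_opt X y lam1))"
    and "g \<equiv> (\<lambda>lam. (((1/lam) *\<^sub>R y - lasso_dual_opt X y lam1) \<bullet> y)
                    / norm ((1/lam) *\<^sub>R y - lasso_dual_opt X y lam1))"
  shows "strict_mono_on {0<..lam1} f \<and> strict_antimono_on {0<..lam1} g"
proof -
  define lm where "lm = linf_norm (transpose X *v y)"
  define th where "th = lasso_dual_opt X y lam1"
  define F where "F = dual_feasible X"
  have lm: "0 < lam1" "lam1 < lm" using assms(2,3) lm_def by auto
  have cF: "closed F" using closed_F F_def by simp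
  have yF: "(1/lm) *\<^sub>R y \<in> F"
    unfolding F_def dual_feasible_def mem_Collect_eq linf_le_iff mv_scale
  proof (rule allI)
    fix j
    have "\<bar>(transpose X *v y) $ j\<bar> \<le> lm" unfolding lm_def by (rule linf_ge)
    then show "\<bar>((1/lm) *\<^sub>R (transpose X *v y)) $ j\<bar> \<le> 1" using lm by (simp add: abs_mult)
  qed
  have thF: "th \<in> F" unfolding th_def lasso_dual_opt_def F_def
    using closest_point_in_set[of F] cF yF F_def by blast
  have thle: "dist ((1/lam1) *\<^sub>R y) th \<le> dist ((1/lam1) *\<^sub>R y) ((1/lm) *\<^sub>R y)"
    unfolding th_def lasso_dual_opt_def using closest_point_le[OF cF yF] F_def by metis
  have notpar: "th \<noteq> \<mu> *\<^sub>R y" for \<mu>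
  proof
    assume th: "th = \<mu> *\<^sub>R y"
    have "\<bar>\<mu>\<bar> * lm \<le> 1"
    proof -
      have "lm \<in> range (\<lambda>j. \<bar>(transpose X *v y) $ j\<bar>)"
        unfolding lm_def linf_norm_def by (rule Max_in) auto
      then obtain j where j: "lm = \<bar>(transpose X *v y) $ j\<bar>" by blast
      have "linf_norm (transpose X *v th) \<le> 1" using thF F_def dual_feasible_def by auto
      then have "\<bar>(transpose X *v th) $ j\<bar> \<le> 1" using linf_le_iff by blast
      then show ?thesis using j th by (simp add: mv_scale abs_mult)
    qed
    then have mu: "\<mu> \<le> 1/lm" using lm by (simp add: field_simps) (smt (verit) abs_ge_self mult_right_mono mult.commute)
    have ny: "norm y > 0" using assms(1) by simp
    have "dist ((1/lam1) *\<^sub>R y) th = \<bar>1/lam1 - \<mu>\<bar> * norm y"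
      unfolding th dist_norm by (simp add: scaleR_diff_left[symmetric] del: scaleR_diff_left)
    moreover have "dist ((1/lam1) *\<^sub>R y) ((1/lm) *\<^sub>R y) = \<bar>1/lam1 - 1/lm\<bar> * norm y"
      unfolding dist_norm by (simp add: scaleR_diff_left[symmetric] del: scaleR_diff_left)
    ultimately have "\<bar>1/lam1 - \<mu>\<bar> \<le> \<bar>1/lam1 - 1/lm\<bar>" using thle ny by simp
    moreover have "1/lm < 1/lam1" using lm by (simp add: frac_less2)
    ultimately have "\<mu> = 1/lm" using mu by linarith
    then show False using assms(4) th th_def lm_def by simp
  qed
  define a where "a = (1/lam1) *\<^sub>R y - th"
  define A where "A = a \<bullet> a"
  define B where "B = a \<bullet> y"
  define C where "C = y \<bullet> y"
  have nz: "a + s *\<^sub>R y \<noteq> 0" for s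
  proof
    assume "a + s *\<^sub>R y = 0"
    then have "th = (1/lam1 + s) *\<^sub>R y" unfolding a_def by (simp add: algebra_simps scaleR_add_left)
    then show False using notpar by blast
  qed
  have nsq: "(a + s *\<^sub>R y) \<bullet> (a + s *\<^sub>R y) = A + 2 * s * B + s^2 * C" for s
    unfolding A_def B_def C_def by (simp add: inner_add_left inner_add_right inner_commute power2_eq_square algebra_simps)
  have Cp: "C > 0" using assms(1) C_def by simp
  have BAC: "B^2 < A*C"
  proof -
    have "0 < (a + (-B/C) *\<^sub>R y) \<bullet> (a + (-B/C) *\<^sub>R y)" using nz[of "-B/C"] by simp
    also have "\<dots> = A - B^2/C" unfolding nsq using Cp by (simp add: field_simps power2_eq_square)
    finally show ?thesis using Cp by (simp add: field_simps)
  qed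
  have rep: "(1/lam) *\<^sub>R y - th = a + (1/lam - 1/lam1) *\<^sub>R y" for lam
    unfolding a_def by (simp add: algebra_simps)
  have fval: "f lam = (A + (1/lam - 1/lam1) * B) / sqrt (A + 2 * (1/lam - 1/lam1) * B + (1/lam - 1/lam1)^2 * C)" for lam
    unfolding f_def th_def[symmetric] rep norm_eq_sqrt_inner nsq
    unfolding A_def B_def by (simp add: inner_add_left inner_add_right inner_commute)
  have gval: "g lam = (B + (1/lam - 1/lam1) * C) / sqrt (A + 2 * (1/lam - 1/lam1) * B + (1/lam - 1/lam1)^2 * C)" for lam
    unfolding g_def th_def[symmetric] rep norm_eq_sqrt_inner nsq
    unfolding B_def C_def by (simp add: inner_add_left inner_add_right inner_commute)
  have ord: "1/l' - 1/lam1 < 1/l - 1/lam1" "0 \<le> 1/l' - 1/lam1"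
    if "l \<in> {0<..lam1}" "l' \<in> {0<..lam1}" "l < l'" for l l'
    using that by (auto simp: frac_le frac_less2)
  show ?thesis
  proof
    show "strict_mono_on {0<..lam1} f"
    proof (rule monotone_onI)
      fix l l' assume "l \<in> {0<..lam1}" "l' \<in> {0<..lam1}" "l < l'"
      from ord[OF this] show "f l < f l'" unfolding fval using scal_h[OF Cp BAC] by blast 
    qed
    show "strict_antimono_on {0<..lam1} g"
    proof (rule monotone_onI)
      fix l l' assume "l \<in> {0<..lam1}" "l' \<in> {0<..lam1}" "l < l'"
      from ord[OF this] show "g l' < g l" unfolding gval using scal_k[OF Cp BAC] by blast 
    qed
  qed
qed

end
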